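(* Let $\hat A\in\mathbb{R}^{n\times n}$, $\hat B\in\mathbb{R}^{n\times m}$, and $\rho>0$. Let $Q\in\mathbb{R}^{n\times n}$, $R\in\mathbb{R}^{m\times m}$ with $Q\succ0$, $R\succ0$, factored as $\begin{bmatrix}Q&0\\0&R\end{bmatrix}=\begin{bmatrix}C_c^\top\\ (D_c^u)^\top\end{bmatrix}\begin{bmatrix}C_c & D_c^u\end{bmatrix}$ with $C_c\in\mathbb{R}^{n_c\times n}$, $D_c^u\in\mathbb{R}^{n_c\times m}$, $n_c=n+m$. Define $C_z=\begin{bmatrix}\rho I_n\\ 0_{m\times n}\end{bmatrix}$ and $D_z^u=\begin{bmatrix}0_{n\times m}\\ \rho I_m\end{bmatrix}$. Suppose there exist a symmetric $X\in\mathbb{R}^{n\times n}$ with $X\succ0$, a matrix $M\in\mathbb{R}^{m\times n}$, and a scalar $\beta>0$ such that $$\begin{bmatrix} -\beta I_{n+m} & 0 & 0 & C_zX-D_z^uM & 0\\ * & -I_{n_c} & 0 & C_cX-D_c^uM & 0\\ * & * & -X & \hat AX-\hat BM & \beta I_n\\ * & * & * & -X & 0\\ * & * & * & * & -\beta I_n \end{bmatrix}\preceq 0,$$ where $*$ denotes the blocks determined by symmetry. Set $K=MX^{-1}$ and $P=X^{-1}$. Then for every $\Delta A\in\mathbb{R}^{n\times n}$, $\Delta B\in\mathbb{R}^{n\times m}$ with $\|[\Delta A,\ \Delta B]\|\le\rho$, $$\big(\hat A+\Delta A-(\hat B+\Delta B)K\big)^\top P\big(\hat A+\Delta A-(\hat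 B+\Delta B)K\big)-P+Q+K^\top RK\preceq 0,$$ and consequently, for every initial state $x_0\in\mathbb{R}^n$, the trajectory of $x_{t+1}=(\hat A+\Delta A)x_t+(\hat B+\Delta B)u_t$ with $u_t=-Kx_t$ satisfies $$J(x_0)=\lim_{N\to\infty}\sum_{t=0}^{N}\left(x_t^\top Qx_t+u_t^\top Ru_t\right)\le x_0^\top Px_0 .$$ That is, $u_t=-Kx_t$ is a stabilizing guaranteed cost controller for the uncertain system with guaranteed cost $x_0^\top P x_0$.
   Context: $\|\cdot\|$ on matrices denotes the Frobenius norm. The uncertain system $x_{t+1}=(\hat A+\Delta A)x_t+(\hat B+\Delta B)u_t$ arises from an identified model $(\hat A,\hat B)$ of an unknown linear system whose identification error $[\Delta A,\Delta B]$ is only known to satisfy $\|[\Delta A,\Delta B]\|\le\rho$. $I_k$ denotes the $k\times k$ identity and $\preceq 0$ means negative semidefinite. *)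

theory Defs
  imports "HOL-Analysis.Analysis"
begin

definition hcat :: "real^'b^'a \<Rightarrow> real^'c^'a \<Rightarrow> real^('b + 'c)^'a" where
  "hcat A B = (\<chi> i j. case j of Inl k \<Rightarrow> A $ i $ k | Inr k \<Rightarrow> B $ i $ k)"

definition vcat :: "real^'c^'a \<Rightarrow> real^'c^'b \<Rightarrow> real^'c^('a + 'b)" where
  "vcat A B = (\<chi> i. case i of Inl k \<Rightarrow> A $ k | Inr k \<Rightarrow> B $ k)"

definition pos_def :: "real^'n^'n \<Rightarrow> bool" where
  "pos_def S \<longleftrightarrow> transpose S = S \<and> (\<forall>x. x \<noteq> 0 \<longrightarrow> x \<bullet> (S *v x) > 0)"

definition neg_semidef :: "real^'n^'n \<Rightarrow> bool" where
  "neg_semidef S \<longleftrightarrow> transpose S = S \<and> (\<forall>x. x \<bullet> (S *v x) \<le> 0)"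

definition Cz :: "real \<Rightarrow> real^'n::finite^('n + 'm::finite)" where
  "Cz \<rho> = vcat (mat \<rho>) (0 :: real^'n^'m)"

definition Dzu :: "real \<Rightarrow> real^'m::finite^('n::finite + 'm)" where
  "Dzu \<rho> = vcat (0 :: real^'m^'n) (mat \<rho>)"

definition lmi_matrix ::
  "real^'n^'n \<Rightarrow> real^'m^'n \<Rightarrow> real \<Rightarrow> real^'n^('n+'m) \<Rightarrow> real^'m^('n+'m)
   \<Rightarrow> real^'n^'n \<Rightarrow> real^'n^'m \<Rightarrow> real
   \<Rightarrow> real^(('n+'m) + (('n+'m) + ('n + ('n + 'n))))^(('n+'m) + (('n+'m) + ('n + ('n + 'n))))"
  where
  "lmi_matrix Ah Bh \<rho> Cc Dcu X M \<beta> =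
     (let W1 = Cz \<rho> ** X - Dzu \<rho> ** M;
          W2 = Cc ** X - Dcu ** M;
          W3 = Ah ** X - Bh ** M;
          Z = (0 :: real^'n^'n)
      in vcat
        (hcat (mat (-\<beta>)) (hcat 0 (hcat 0 (hcat W1 0))))
      (vcat
        (hcat 0 (hcat (mat (-1)) (hcat 0 (hcat W2 0))))
      (vcat
        (hcat 0 (hcat 0 (hcat (-X) (hcat W3 (mat \<beta>)))))
      (vcat
        (hcat (transpose W1) (hcat (transpose W2) (hcat (transpose W3) (hcat (-X) Z))))
        (hcat 0 (hcat 0 (hcat (mat \<beta>) (hcat Z (mat (-\<beta>))))))))))"

end

theory Submission
  imports Defs
begin


definition vc :: "real^'a \<Rightarrow> real^'b \<Rightarrow> real^('a+'b)" where
  "vc x y = (\<chi> i. case i of Inl k \<Rightarrow> x$k | Inr k \<Rightarrow> y$k)"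

lemma sum_UNIV_plus: "(\<Sum>i\<in>(UNIV::('a::finite+'b::finite) set). f i) = (\<Sum>i\<in>UNIV. f (Inl i)) + (\<Sum>i\<in>UNIV. f (Inr i))"
  by (simp add: UNIV_Plus_UNIV[symmetric] sum.Plus del: UNIV_Plus_UNIV)

lemma hcat_mv: "hcat A B *v vc x y = A *v x + B *v y"
  by (simp add: vec_eq_iff matrix_vector_mult_def hcat_def vc_def sum_UNIV_plus)

lemma vcat_mv: "vcat A B *v v = vc (A *v v) (B *v v)"
  by (simp add: vec_eq_iff matrix_vector_mult_def vcat_def vc_def split: sum.split)

lemma inner_vc: "vc a b \<bullet> vc c d = a \<bullet> c + b \<bullet> d"
  by (simp add: inner_vec_def vc_def sum_UNIV_plus)

lemma vc_zero[simp]: "vc 0 0 = 0"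
  by (simp add: vec_eq_iff vc_def split: sum.split)

lemma vc_split: "\<exists>a b. v = vc a b"
  apply (rule exI[of _ "\<chi> k. v $ Inl k"], rule exI[of _ "\<chi> k. v $ Inr k"])
  by (simp add: vec_eq_iff vc_def split: sum.split)

lemma norm_vc_sq: "norm (vc a b)^2 = norm a ^2 + norm b^2"
  by (simp add: power2_norm_eq_inner inner_vc)

lemma mat_mv: "mat c *v (x::real^'n) = c *\<^sub>R x"
proof -
  have "mat c *v (x::real^'n) = c *s x"
    apply (vector matrix_vector_mult_def mat_def)
    apply (simp add: if_distrib if_distribR cong del: if_weak_cong)
    done
  then show ?thesis by (simp add: vec_eq_iff)
qed

lemma norm_mv_le: "norm ((A::real^'n^'m) *v x) \<le> norm A * norm x"
proof -
  have 1: "norm (A *v x)^2 = (\<Sum>i\<in>UNIV. (A$i \<bullet> x)^2)"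
    unfolding power2_norm_eq_inner inner_vec_def[of "A *v x"] matrix_vector_mul_component
    by (simp add: power2_eq_square)
  have 2: "(A$i \<bullet> x)^2 \<le> norm (A$i)^2 * norm x^2" for i
    using Cauchy_Schwarz_ineq[of "A$i" x] unfolding power2_norm_eq_inner .
  have 3: "(\<Sum>i\<in>UNIV. norm (A$i)^2 * norm x^2) = (norm A * norm x)^2"
    unfolding power_mult_distrib sum_distrib_right[symmetric] power2_norm_eq_inner inner_vec_def[of A A]
    by (simp add: power2_eq_square)
  have "norm (A *v x)^2 \<le> (norm A * norm x)^2"
    unfolding 1 3[symmetric] by (rule sum_mono) (rule 2)
  then show ?thesis
    using power2_le_imp_le by fastforce
qed

lemma vc_add: "vc a b + vc c d = vc (a + c) (b + d)"
  by (simp add: vec_eq_iff vc_def split: sum.split)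
lemma vc_diff: "vc a b - vc c d = vc (a - c) (b - d)"
  by (simp add: vec_eq_iff vc_def split: sum.split)
lemma vc_scale: "r *\<^sub>R vc a b = vc (r *\<^sub>R a) (r *\<^sub>R b)"
  by (simp add: vec_eq_iff vc_def split: sum.split)

lemma mv_add: "(A + B) *v x = A *v x + B *v (x::real^'n)"
  by (simp add: vec_eq_iff matrix_vector_mult_def sum.distrib distrib_right)
lemma mv_diff: "(A - B) *v x = A *v x - B *v (x::real^'n)"
  by (simp add: vec_eq_iff matrix_vector_mult_def sum_subtractf left_diff_distrib)
lemma mv_uminus: "(- A) *v x = - (A *v (x::real^'n))"
  by (simp add: vec_eq_iff matrix_vector_mult_def sum_negf)
lemma mv_vadd: "A *v (x + y) = A *v x + A *v (y::real^'n)"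
  by (simp add: vec_eq_iff matrix_vector_mult_def sum.distrib distrib_left)
lemma mv_vdiff: "A *v (x - y) = A *v x - A *v (y::real^'n)"
  by (simp add: vec_eq_iff matrix_vector_mult_def sum_subtractf right_diff_distrib)
lemma mv_vneg: "A *v (- y) = - (A *v (y::real^'n))"
  by (simp add: vec_eq_iff matrix_vector_mult_def sum_negf)
lemma mv_scaleR: "A *v (r *\<^sub>R x) = r *\<^sub>R (A *v (x::real^'n))"
  by (simp add: vec_eq_iff matrix_vector_mult_def sum_distrib_left mult.left_commute)
lemma tr_inner1: "(transpose A *v a) \<bullet> b = a \<bullet> ((A::real^'n^'m) *v b)"
  by (simp add: dot_lmul_matrix)
lemma transpose_add': "transpose (A + B) = transpose A + transpose (B::real^'n^'m)"
  by (simp add: transpose_def vec_eq_iff)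
lemma transpose_diff': "transpose (A - B) = transpose A - transpose (B::real^'n^'m)"
  by (simp add: transpose_def vec_eq_iff)
lemma mv_mm: "(A ** B) *v x = A *v (B *v (x::real^'n))"
  by (simp add: matrix_vector_mul_assoc)
lemma tr_inner2: "a \<bullet> (transpose A *v b) = ((A::real^'n^'m) *v a) \<bullet> b"
  using tr_inner1[of A b a] by (simp add: inner_commute)


lemma pd_inv:
  assumes "pos_def (X::real^'n^'n)"
  shows "X ** matrix_inv X = mat 1" "matrix_inv X ** X = mat 1"
    "transpose (matrix_inv X) = matrix_inv X"
proof -
  have tX: "transpose X = X" using assms unfolding pos_def_def by simp
  have "\<forall>x. X *v x = 0 \<longrightarrow> x = 0" using assms unfolding pos_def_def
    by (metis inner_zero_right less_irrefl)
  then obtain B where "B ** X = mat 1" using matrix_left_invertible_ker by blast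
  hence inv: "invertible X" using invertible_left_inverse by blast
  have both: "X ** matrix_inv X = mat 1 \<and> matrix_inv X ** X = mat 1"
    unfolding matrix_inv_def using inv[unfolded invertible_def] by (rule someI_ex)
  then show a: "X ** matrix_inv X = mat 1" "matrix_inv X ** X = mat 1" by auto
  have "transpose (matrix_inv X) ** X = mat 1"
    using a(1) by (metis tX matrix_transpose_mul transpose_mat)
  hence "transpose (matrix_inv X) = transpose (matrix_inv X) ** (X ** matrix_inv X)"
    using a by (simp add: matrix_mul_rid)
  also have "\<dots> = matrix_inv X"
    by (simp add: matrix_mul_assoc \<open>transpose (matrix_inv X) ** X = mat 1\<close> matrix_mul_lid)
  finally show "transpose (matrix_inv X) = matrix_inv X" .
qed

lemma pd_nonneg: "pos_def Q \<Longrightarrow> 0 \<le> x \<bullet> ((Q::real^'n^'n) *v x)"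
  unfolding pos_def_def by (cases "x = 0") (auto intro: less_imp_le)

lemma pd_lower:
  assumes "pos_def (Q::real^'n^'n)"
  shows "\<exists>l>0. \<forall>x. l * norm x ^ 2 \<le> x \<bullet> (Q *v x)"
proof -
  have cont: "continuous_on (sphere (0::real^'n) 1) (\<lambda>x. x \<bullet> (Q *v x))"
    by (intro continuous_intros)
  have ne: "sphere (0::real^'n) 1 \<noteq> {}"
    using norm_axis_1[of undefined] by (metis mem_sphere_0 empty_iff)
  obtain x0 where x0: "x0 \<in> sphere 0 1" "\<forall>y\<in>sphere 0 1. x0 \<bullet> (Q *v x0) \<le> y \<bullet> (Q *v y)"
    using continuous_attains_inf[OF compact_sphere ne cont] by blast
  have "x0 \<noteq> 0" using x0(1) by auto
  hence lpos: "x0 \<bullet> (Q *v x0) > 0" using assms unfolding pos_def_def by blast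
  show ?thesis
  proof (intro exI[of _ "x0 \<bullet> (Q *v x0)"] conjI allI lpos)
    fix x :: "real^'n"
    show "x0 \<bullet> (Q *v x0) * norm x ^ 2 \<le> x \<bullet> (Q *v x)"
    proof (cases "x = 0")
      case True then show ?thesis by simp
    next
      case False
      define u where "u = (1 / norm x) *\<^sub>R x"
      have "u \<in> sphere 0 1" using False by (simp add: u_def)
      hence "x0 \<bullet> (Q *v x0) \<le> u \<bullet> (Q *v u)" using x0 by blast
      hence "x0 \<bullet> (Q *v x0) * norm x ^ 2 \<le> u \<bullet> (Q *v u) * norm x ^ 2"
        by (simp add: mult_right_mono)
      also have "\<dots> = x \<bullet> (Q *v x)"
        using False by (simp add: u_def mv_scaleR power2_eq_square)
      finally show ?thesis .
    qed
  qed
qed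



lemma vm_inner: "a \<bullet> (b v* (A::real^'n^'m)) = b \<bullet> (A *v a)"
  by (metis dot_lmul_matrix inner_commute)

lemma vm_inner': "a \<bullet> (b v* (A::real^'n^'m)) = (A *v a) \<bullet> b"
  by (metis dot_lmul_matrix inner_commute)

lemma lmi_qf:
  fixes Ah :: "real^'n^'n" and Bh :: "real^'m^'n" and \<rho> :: real
    and Cc :: "real^'n^('n+'m)" and Dcu :: "real^'m^('n+'m)"
    and X :: "real^'n^'n" and M :: "real^'n^'m" and \<beta> :: real
  assumes W1: "W1 = Cz \<rho> ** X - Dzu \<rho> ** M"
    and W2: "W2 = Cc ** X - Dcu ** M"
    and W3: "W3 = Ah ** X - Bh ** M"
  shows "vc v1 (vc v2 (vc v3 (vc v4 v5))) \<bullet> (lmi_matrix Ah Bh \<rho> Cc Dcu X M \<beta> *v vc v1 (vc v2 (vc v3 (vc v4 v5))))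
    = 2 * (v1 \<bullet> (W1 *v v4)) - \<beta> * (v1 \<bullet> v1) + 2 * (v2 \<bullet> (W2 *v v4)) - v2 \<bullet> v2
      + 2 * (v3 \<bullet> (W3 *v v4)) - v3 \<bullet> (X *v v3) + 2 * \<beta> * (v3 \<bullet> v5)
      - v4 \<bullet> (X *v v4) - \<beta> * (v5 \<bullet> v5)"
  unfolding lmi_matrix_def Let_def W1[symmetric] W2[symmetric] W3[symmetric]
  by (simp add: vcat_mv hcat_mv inner_vc mat_mv mv_uminus inner_add_right inner_diff_right
      tr_inner2 vm_inner inner_commute[of v5 v3] inner_commute[of "W1 *v v4" v1]
      inner_commute[of "W2 *v v4" v2] inner_commute[of "W3 *v v4" v3] algebra_simps)


lemma S_expand:
  "z \<bullet> ((transpose A ** P ** A - P + Q + transpose K ** R ** K) *v z)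
   = (A *v z) \<bullet> (P *v (A *v z)) - z \<bullet> (P *v z) + z \<bullet> (Q *v z) + (K *v z) \<bullet> (R *v (K *v (z::real^'n)))"
  for A P Q :: "real^'n^'n" and K :: "real^'n^'m" and R :: "real^'m^'m"
  by (simp add: mv_add mv_diff mv_mm inner_add_right inner_diff_right tr_inner2 vm_inner')

lemma part1:
  fixes Ah :: "real^'n^'n" and Bh :: "real^'m^'n" and \<rho> :: real
    and Q :: "real^'n^'n" and R :: "real^'m^'m"
    and Cc :: "real^'n^('n+'m)" and Dcu :: "real^'m^('n+'m)"
    and X :: "real^'n^'n" and M :: "real^'n^'m" and \<beta> :: real
    and dA :: "real^'n^'n" and dB :: "real^'m^'n"
  assumes rho_pos: "\<rho> > 0"
    and Q_pd: "pos_def Q" and R_pd: "pos_def R"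
    and fact_Q: "transpose Cc ** Cc = Q"
    and fact_0: "transpose Cc ** Dcu = 0"
    and fact_R: "transpose Dcu ** Dcu = R"
    and X_pd: "pos_def X"
    and beta_pos: "\<beta> > 0"
    and lmi: "neg_semidef (lmi_matrix Ah Bh \<rho> Cc Dcu X M \<beta>)"
    and K_def: "K = M ** matrix_inv X" and P_def: "P = matrix_inv X"
    and nrm: "norm (hcat dA dB) \<le> \<rho>"
  shows "neg_semidef (transpose (Ah + dA - (Bh + dB) ** K) ** P ** (Ah + dA - (Bh + dB) ** K)
                   - P + Q + transpose K ** R ** K)"
proof -
  define Acl where "Acl = Ah + dA - (Bh + dB) ** K"
  have XP: "X ** P = mat 1" and PX: "P ** X = mat 1" and tP: "transpose P = P"
    using pd_inv[OF X_pd] P_def by auto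
  have tX: "transpose X = X" using X_pd unfolding pos_def_def by simp
  have tQ: "transpose Q = Q" using Q_pd unfolding pos_def_def by simp
  have tR: "transpose R = R" using R_pd unfolding pos_def_def by simp
  have sym: "transpose (transpose Acl ** P ** Acl - P + Q + transpose K ** R ** K)
      = transpose Acl ** P ** Acl - P + Q + transpose K ** R ** K"
    by (simp add: transpose_add' transpose_diff' matrix_transpose_mul tP tQ tR matrix_mul_assoc)
  have qf: "z \<bullet> ((transpose Acl ** P ** Acl - P + Q + transpose K ** R ** K) *v z) \<le> 0" for z
  proof -
    define y where "y = P *v z"
    have Xy: "X *v y = z" by (simp add: y_def matrix_vector_mul_assoc XP)
    define Kz where "Kz = K *v z"
    have Kz': "M *v y = Kz" by (simp add: Kz_def y_def K_def P_def matrix_vector_mul_assoc)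
    define W1 where "W1 = Cz \<rho> ** X - Dzu \<rho> ** M"
    define W2 where "W2 = Cc ** X - Dcu ** M"
    define W3 where "W3 = Ah ** X - Bh ** M"
    define p where "p = W1 *v y"
    have p: "p = vc (\<rho> *\<^sub>R z) (- (\<rho> *\<^sub>R Kz))"
      by (simp add: p_def W1_def mv_diff mv_mm Xy Kz' Cz_def Dzu_def vcat_mv mat_mv vc_diff)
    define d where "d = dA *v z - dB *v Kz"
    have Hp: "hcat dA dB *v p = \<rho> *\<^sub>R d"
      by (simp add: p hcat_mv mv_scaleR mv_vneg d_def scaleR_diff_right)
    have "\<rho> * norm d = norm (hcat dA dB *v p)" using Hp rho_pos by simp
    also have "\<dots> \<le> norm (hcat dA dB) * norm p" by (rule norm_mv_le)
    also have "\<dots> \<le> \<rho> * norm p" using nrm by (simp add: mult_right_mono)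
    finally have "norm d \<le> norm p" using rho_pos by simp
    hence dd: "d \<bullet> d \<le> p \<bullet> p"
      by (metis norm_ge_zero power2_norm_eq_inner power_mono)
    define w where "w = Acl *v z"
    have W3y: "W3 *v y = w - d"
      by (simp add: w_def Acl_def W3_def d_def mv_add mv_diff mv_mm Xy Kz' Kz_def[symmetric] algebra_simps)
    have XPw: "X *v (P *v w) = w" by (simp add: matrix_vector_mul_assoc XP)
    have W2y: "W2 *v y = Cc *v z - Dcu *v Kz"
      by (simp add: W2_def mv_diff mv_mm Xy Kz')
    have L: "vc ((1/\<beta>) *\<^sub>R p) (vc (W2 *v y) (vc (P *v w) (vc y ((1/\<beta>) *\<^sub>R d)))) \<bullet>
       (lmi_matrix Ah Bh \<rho> Cc Dcu X M \<beta> *v vc ((1/\<beta>) *\<^sub>R p) (vc (W2 *v y) (vc (P *v w) (vc y ((1/\<beta>) *\<^sub>R d))))) \<le> 0"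
      using lmi unfolding neg_semidef_def by blast
    have E: "vc ((1/\<beta>) *\<^sub>R p) (vc (W2 *v y) (vc (P *v w) (vc y ((1/\<beta>) *\<^sub>R d)))) \<bullet>
       (lmi_matrix Ah Bh \<rho> Cc Dcu X M \<beta> *v vc ((1/\<beta>) *\<^sub>R p) (vc (W2 *v y) (vc (P *v w) (vc y ((1/\<beta>) *\<^sub>R d)))))
       = (1/\<beta>) * (p \<bullet> p - d \<bullet> d) + (W2 *v y) \<bullet> (W2 *v y) + w \<bullet> (P *v w) - y \<bullet> z"
      unfolding lmi_qf[OF W1_def W2_def W3_def] p_def[symmetric] W3y XPw Xy
      using beta_pos
      by (simp add: inner_diff_right inner_commute[of "P *v w" w] inner_commute[of "P *v w" d] field_simps power2_eq_square)
    have nn: "0 \<le> (1/\<beta>) * (p \<bullet> p - d \<bullet> d)" using dd beta_pos by simp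
    have yz: "z \<bullet> (P *v z) = y \<bullet> z" by (simp add: y_def inner_commute)
    have zQz: "z \<bullet> (Q *v z) = (Cc *v z) \<bullet> (Cc *v z)"
      by (simp add: fact_Q[symmetric] mv_mm tr_inner2 vm_inner')
    have KRK: "Kz \<bullet> (R *v Kz) = (Dcu *v Kz) \<bullet> (Dcu *v Kz)"
      by (simp add: fact_R[symmetric] mv_mm tr_inner2 vm_inner')
    have cross: "(Cc *v z) \<bullet> (Dcu *v Kz) = 0"
      using tr_inner2[of z Cc "Dcu *v Kz"] by (simp add: mv_mm[symmetric] fact_0)
    have W2sq: "(W2 *v y) \<bullet> (W2 *v y) = z \<bullet> (Q *v z) + Kz \<bullet> (R *v Kz)"
      unfolding W2y zQz KRK using cross
      by (simp add: inner_diff_left inner_diff_right inner_commute[of "Dcu *v Kz" "Cc *v z"])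
    have "z \<bullet> ((transpose Acl ** P ** Acl - P + Q + transpose K ** R ** K) *v z)
        = w \<bullet> (P *v w) - y \<bullet> z + (W2 *v y) \<bullet> (W2 *v y)"
      unfolding S_expand W2sq yz by (simp add: w_def Kz_def)
    then show ?thesis using L E nn by linarith
  qed
  show ?thesis
    unfolding neg_semidef_def Acl_def[symmetric] using sym qf by blast
qed



lemma part2:
  fixes A P Q :: "real^'n^'n" and K :: "real^'n^'m" and R :: "real^'m^'m"
    and x :: "nat \<Rightarrow> real^'n" and u :: "nat \<Rightarrow> real^'m"
  assumes S: "neg_semidef (transpose A ** P ** A - P + Q + transpose K ** R ** K)"
    and Vnn: "\<forall>v. 0 \<le> v \<bullet> (P *v v)"
    and Q_pd: "pos_def Q" and R_pd: "pos_def R"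
    and hx0: "x 0 = x0" and hu: "\<forall>t. u t = - (K *v x t)"
    and xs: "\<forall>t. x (Suc t) = A *v x t"
  shows "(\<exists>J. (\<lambda>N. \<Sum>t\<le>N. x t \<bullet> (Q *v x t) + u t \<bullet> (R *v u t)) \<longlonglongrightarrow> J
                  \<and> J \<le> x0 \<bullet> (P *v x0)) \<and> x \<longlonglongrightarrow> 0"
proof -
  define V where "V v = v \<bullet> (P *v v)" for v
  define c where "c t = x t \<bullet> (Q *v x t) + u t \<bullet> (R *v u t)" for t
  define S where "S N = (\<Sum>t\<le>N. c t)" for N
  have lyap: "V (x (Suc t)) - V (x t) + c t \<le> 0" for t
  proof -
    have "x t \<bullet> ((transpose A ** P ** A - P + Q + transpose K ** R ** K) *v x t) \<le> 0"
      using S unfolding neg_semidef_def by blast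
    then show ?thesis unfolding S_expand
      by (simp add: V_def c_def xs hu mv_vneg)
  qed
  have cnn: "0 \<le> c t" for t
    unfolding c_def using pd_nonneg[OF Q_pd] pd_nonneg[OF R_pd] by (simp add: add_nonneg_nonneg)
  have part: "S N \<le> V x0 - V (x (Suc N))" for N
  proof (induction N)
    case 0
    then show ?case using lyap[of 0] hx0 by (simp add: S_def)
  next
    case (Suc N)
    then show ?case using lyap[of "Suc N"] by (simp add: S_def)
  qed
  have Sle: "S N \<le> V x0" for N
    using part[of N] Vnn by (simp add: V_def) (smt (verit) Vnn)
  have inc: "incseq S"
    by (rule incseq_SucI) (simp add: S_def cnn)
  have bdd: "bdd_above (range S)" using Sle by (intro bdd_aboveI[where M="V x0"]) auto
  have lim: "S \<longlonglongrightarrow> (SUP i. S i)" by (rule LIMSEQ_incseq_SUP[OF bdd inc])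
  have Jle: "(SUP i. S i) \<le> V x0"
    by (rule LIMSEQ_le_const2[OF lim]) (use Sle in blast)
  have "(\<lambda>n. S (Suc n) - S n) \<longlonglongrightarrow> (SUP i. S i) - (SUP i. S i)"
    by (intro tendsto_diff LIMSEQ_Suc lim)
  hence "(\<lambda>n. c (Suc n)) \<longlonglongrightarrow> 0" by (simp add: S_def)
  hence c0: "c \<longlonglongrightarrow> 0" by (rule LIMSEQ_imp_Suc)
  obtain l where l: "l > 0" "\<forall>v. l * norm v ^ 2 \<le> v \<bullet> (Q *v v)"
    using pd_lower[OF Q_pd] by blast
  have bnd: "norm (x t) ^ 2 \<le> c t / l" for t
  proof -
    have "l * norm (x t) ^ 2 \<le> c t"
      using l(2) pd_nonneg[OF R_pd, of "u t"] unfolding c_def by (smt (verit))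
    then show ?thesis using l(1) by (simp add: field_simps mult.commute)
  qed
  have "(\<lambda>t. norm (x t) ^ 2) \<longlonglongrightarrow> 0"
    by (rule real_tendsto_sandwich[where f="\<lambda>_. 0" and h="\<lambda>t. c t / l"])
       (use bnd in \<open>auto intro: tendsto_divide_zero c0\<close>)
  hence "(\<lambda>t. sqrt (norm (x t) ^ 2)) \<longlonglongrightarrow> sqrt 0" by (rule tendsto_real_sqrt)
  hence "(\<lambda>t. norm (x t)) \<longlonglongrightarrow> 0" by simp
  hence "x \<longlonglongrightarrow> 0" by (simp add: tendsto_norm_zero_iff)
  moreover have "(\<lambda>N. \<Sum>t\<le>N. x t \<bullet> (Q *v x t) + u t \<bullet> (R *v u t)) \<longlonglongrightarrow> (SUP i. S i)"
  proof -
    have "S = (\<lambda>N. \<Sum>t\<le>N. x t \<bullet> (Q *v x t) + u t \<bullet> (R *v u t))"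
      by (simp add: fun_eq_iff S_def c_def)
    then show ?thesis using lim by simp
  qed
  ultimately show ?thesis using Jle by (auto simp: V_def)
qed

theorem theorem2:
  fixes Ah :: "real^'n^'n" and Bh :: "real^'m^'n" and \<rho> :: real
    and Q :: "real^'n^'n" and R :: "real^'m^'m"
    and Cc :: "real^'n^('n+'m)" and Dcu :: "real^'m^('n+'m)"
    and X :: "real^'n^'n" and M :: "real^'n^'m" and \<beta> :: real
  assumes rho_pos: "\<rho> > 0"
    and Q_pd: "pos_def Q" and R_pd: "pos_def R"
    and fact_Q: "transpose Cc ** Cc = Q"
    and fact_0: "transpose Cc ** Dcu = 0"
    and fact_R: "transpose Dcu ** Dcu = R"
    and X_pd: "pos_def X"
    and beta_pos: "\<beta> > 0"
    and lmi: "neg_semidef (lmi_matrix Ah Bh \<rho> Cc Dcu X M \<beta>)"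
  defines "K \<equiv> M ** matrix_inv X" and "P \<equiv> matrix_inv X"
  shows "\<forall>dA :: real^'n^'n. \<forall>dB :: real^'m^'n. norm (hcat dA dB) \<le> \<rho> \<longrightarrow>
      neg_semidef (transpose (Ah + dA - (Bh + dB) ** K) ** P ** (Ah + dA - (Bh + dB) ** K)
                   - P + Q + transpose K ** R ** K)
    \<and> (\<forall>(x0 :: real^'n) (x :: nat \<Rightarrow> real^'n) (u :: nat \<Rightarrow> real^'m).
         x 0 = x0 \<longrightarrow> (\<forall>t. u t = - (K *v x t))
         \<longrightarrow> (\<forall>t. x (Suc t) = (Ah + dA) *v x t + (Bh + dB) *v u t)
         \<longrightarrow> (\<exists>J. (\<lambda>N. \<Sum>t\<le>N. x t \<bullet> (Q *v x t) + u t \<bullet> (R *v u t)) \<longlonglongrightarrow> J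
                  \<and> J \<le> x0 \<bullet> (P *v x0))
           \<and> x \<longlonglongrightarrow> 0)"
  proof (intro allI impI)
  fix dA :: "real^'n^'n" and dB :: "real^'m^'n"
  assume nrm: "norm (hcat dA dB) \<le> \<rho>"
  have S: "neg_semidef (transpose (Ah + dA - (Bh + dB) ** K) ** P ** (Ah + dA - (Bh + dB) ** K)
                   - P + Q + transpose K ** R ** K)"
    by (rule part1[OF rho_pos Q_pd R_pd fact_Q fact_0 fact_R X_pd beta_pos lmi
          K_def[THEN meta_eq_to_obj_eq] P_def[THEN meta_eq_to_obj_eq] nrm])
  have XP: "X ** P = mat 1" using pd_inv[OF X_pd] P_def by auto
  have tX: "transpose X = X" using X_pd unfolding pos_def_def by simp
  have Vnn: "\<forall>v. 0 \<le> v \<bullet> (P *v v)"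
  proof
    fix v :: "real^'n"
    have "v = X *v (P *v v)" by (simp add: matrix_vector_mul_assoc XP)
    hence "v \<bullet> (P *v v) = (X *v (P *v v)) \<bullet> (P *v v)" by simp
    also have "\<dots> = (P *v v) \<bullet> (X *v (P *v v))"
      using tr_inner2[of "P *v v" X "P *v v"] tX by (simp add: inner_commute)
    finally show "0 \<le> v \<bullet> (P *v v)" using pd_nonneg[OF X_pd, of "P *v v"] by simp
  qed
  show "neg_semidef (transpose (Ah + dA - (Bh + dB) ** K) ** P ** (Ah + dA - (Bh + dB) ** K)
                   - P + Q + transpose K ** R ** K)
    \<and> (\<forall>(x0 :: real^'n) (x :: nat \<Rightarrow> real^'n) (u :: nat \<Rightarrow> real^'m).
         x 0 = x0 \<longrightarrow> (\<forall>t. u t = - (K *v x t))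
         \<longrightarrow> (\<forall>t. x (Suc t) = (Ah + dA) *v x t + (Bh + dB) *v u t)
         \<longrightarrow> (\<exists>J. (\<lambda>N. \<Sum>t\<le>N. x t \<bullet> (Q *v x t) + u t \<bullet> (R *v u t)) \<longlonglongrightarrow> J
                  \<and> J \<le> x0 \<bullet> (P *v x0))
           \<and> x \<longlonglongrightarrow> 0)"
  proof (rule conjI[OF S], intro allI impI)
    fix x0 :: "real^'n" and x :: "nat \<Rightarrow> real^'n" and u :: "nat \<Rightarrow> real^'m"
    assume h1: "x 0 = x0" and h2: "\<forall>t. u t = - (K *v x t)"
      and h3: "\<forall>t. x (Suc t) = (Ah + dA) *v x t + (Bh + dB) *v u t"
    have xs: "\<forall>t. x (Suc t) = (Ah + dA - (Bh + dB) ** K) *v x t"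
      using h2 h3 by (simp add: mv_diff mv_mm mv_vneg)
    show "(\<exists>J. (\<lambda>N. \<Sum>t\<le>N. x t \<bullet> (Q *v x t) + u t \<bullet> (R *v u t)) \<longlonglongrightarrow> J
                  \<and> J \<le> x0 \<bullet> (P *v x0)) \<and> x \<longlonglongrightarrow> 0"
      by (rule part2[OF S Vnn Q_pd R_pd h1 h2 xs])
  qed
qed

end
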